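(* Let $G$ be a connected graph and let $G_\pi$ be a signed graph with underlying graph $G$ that is not balanced. Then there exists a spanning proper subgraph $H$ of $G$ (i.e. $V(H)=V(G)$ and $E(H)\subsetneq E(G)$) such that $\lambda_1(G_\pi)<\rho(H)$.
   Context: All graphs are finite, simple and undirected. A signed graph $G_\pi$ is a pair $(G,\pi)$ with $G=(V,E)$ a graph and $\pi:E\to\{+1,-1\}$. Its adjacency matrix $A(G_\pi)=(A_{ij})$ is the symmetric matrix with $A_{ij}=\pi(\{i,j\})$ if $\{i,j\}\in E$ and $A_{ij}=0$ otherwise; its eigenvalues $\lambda_1(G_\pi)\ge\cdots\ge\lambda_n(G_\pi)$ are those of $A(G_\pi)$. Two signed graphs $G_\pi,G_{\pi'}$ on the same graph are switching equivalent if $A(G_{\pi'})=D^{-1}A(G_\pi)D$ for some diagonal matrix $D$ with diagonal entries $\pm1$. $G_+$ denotes the signing with all signs $+1$. $G_\pi$ is balanced if it is switching equivalent to $G_+$. $\rho(H)$ denotes the spectral radius (largest modulus of an eigenvalue) of the adjacency matrix of a graph $H$. *)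

theory Defs
  imports "HOL-Analysis.Analysis"
begin

text \<open>A finite simple graph: vertex set = the finite type 'n, edges given by a
  symmetric irreflexive relation.\<close>
definition simple_graph :: "('n::finite \<Rightarrow> 'n \<Rightarrow> bool) \<Rightarrow> bool" where
  "simple_graph E \<longleftrightarrow> symp E \<and> irreflp E"

definition connected_graph :: "('n::finite \<Rightarrow> 'n \<Rightarrow> bool) \<Rightarrow> bool" where
  "connected_graph E \<longleftrightarrow> (\<forall>u v. E\<^sup>*\<^sup>* u v)"

definition signing :: "('n::finite \<Rightarrow> 'n \<Rightarrow> bool) \<Rightarrow> ('n \<Rightarrow> 'n \<Rightarrow> real) \<Rightarrow> bool" where
  "signing E \<pi> \<longleftrightarrow> (\<forall>i j. E i j \<longrightarrow> \<pi> i j = \<pi> j i \<and> (\<pi> i j = 1 \<or> \<pi> i j = -1))"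

definition signed_adj :: "('n::finite \<Rightarrow> 'n \<Rightarrow> bool) \<Rightarrow> ('n \<Rightarrow> 'n \<Rightarrow> real) \<Rightarrow> real^'n^'n" where
  "signed_adj E \<pi> = (\<chi> i j. if E i j then \<pi> i j else 0)"

definition adj :: "('n::finite \<Rightarrow> 'n \<Rightarrow> bool) \<Rightarrow> real^'n^'n" where
  "adj E = signed_adj E (\<lambda>_ _. 1)"

definition diag_mat :: "('n::finite \<Rightarrow> real) \<Rightarrow> real^'n^'n" where
  "diag_mat d = (\<chi> i j. if i = j then d i else 0)"

definition switching_equivalent :: "real^'n::finite^'n \<Rightarrow> real^'n^'n \<Rightarrow> bool" where
  "switching_equivalent A A' \<longleftrightarrow>
     (\<exists>d. (\<forall>i. d i = 1 \<or> d i = -1) \<and> A' = matrix_inv (diag_mat d) ** A ** diag_mat d)"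

definition balanced :: "('n::finite \<Rightarrow> 'n \<Rightarrow> bool) \<Rightarrow> ('n \<Rightarrow> 'n \<Rightarrow> real) \<Rightarrow> bool" where
  "balanced E \<pi> \<longleftrightarrow> switching_equivalent (adj E) (signed_adj E \<pi>)"

definition real_eigenvalues :: "real^'n::finite^'n \<Rightarrow> real set" where
  "real_eigenvalues A = {l. \<exists>v. v \<noteq> 0 \<and> A *v v = l *\<^sub>R v}"

text \<open>Largest eigenvalue lambda_1 (for symmetric matrices all eigenvalues are real).\<close>
definition lambda1 :: "real^'n::finite^'n \<Rightarrow> real" where
  "lambda1 A = Max (real_eigenvalues A)"

text \<open>Spectral radius of a symmetric real matrix: largest modulus of an eigenvalue
  (all eigenvalues of a symmetric real matrix are real).\<close>
definition sym_spectral_radius :: "real^'n::finite^'n \<Rightarrow> real" where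
  "sym_spectral_radius A = Max (abs ` real_eigenvalues A)"

end

theory Submission
  imports Defs
begin

definition qf :: "real^'n::finite^'n \<Rightarrow> real^'n \<Rightarrow> real" where
  "qf M x = (\<Sum>i\<in>UNIV. \<Sum>j\<in>UNIV. M$i$j * x$i * x$j)"

lemma qf_inner: "x \<bullet> (M *v x) = qf M x"
  by (simp add: qf_def inner_vec_def matrix_vector_mult_def sum_distrib_left mult_ac)

lemma sym_inner:
  fixes M :: "real^'n::finite^'n"
  assumes sym: "\<And>i j. M$i$j = M$j$i"
  shows "u \<bullet> (M *v w) = w \<bullet> (M *v u)"
proof -
  have "u \<bullet> (M *v w) = (\<Sum>i\<in>UNIV. \<Sum>j\<in>UNIV. u$i * M$i$j * w$j)"
    by (simp add: inner_vec_def matrix_vector_mult_def sum_distrib_left mult_ac)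
  also have "\<dots> = (\<Sum>j\<in>UNIV. \<Sum>i\<in>UNIV. u$i * M$i$j * w$j)" by (rule sum.swap)
  also have "\<dots> = w \<bullet> (M *v u)"
    by (simp add: inner_vec_def matrix_vector_mult_def sum_distrib_left mult_ac sym)
  finally show ?thesis .
qed

lemma quad_zero:
  fixes c K :: real
  assumes "\<And>t. 2*t*c + t^2*K \<le> 0"
  shows "c = 0"
proof (rule ccontr)
  assume c: "c \<noteq> 0"
  define q where "q = \<bar>K\<bar> + 1"
  have q: "q > 0" "2*q + K > 0" unfolding q_def by auto
  have "2*(c/q)*c + (c/q)^2*K = c^2/q^2 * (2*q + K)"
    using q by (simp add: field_simps power2_eq_square)
  moreover have "c^2/q^2 * (2*q+K) > 0" using q c by simp
  ultimately show False using assms[of "c/q"] by linarith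
qed

lemma sym_max_eig:
  fixes M :: "real^'n::finite^'n"
  assumes sym: "\<And>i j. M$i$j = M$j$i"
  shows "\<exists>v \<mu>. v \<noteq> 0 \<and> M *v v = \<mu> *\<^sub>R v \<and> (\<forall>u. u \<bullet> (M *v u) \<le> \<mu> * (u \<bullet> u))"
proof -
  let ?f = "\<lambda>u. u \<bullet> (M *v u)"
  have cont: "continuous_on (sphere 0 1) ?f"
    by (intro continuous_intros)
  have ne: "sphere (0::real^'n) 1 \<noteq> {}"
    using norm_axis_1[of undefined] by (metis mem_sphere_0 empty_iff)
  obtain v where v: "v \<in> sphere 0 1" and vmax: "\<And>y. y \<in> sphere 0 1 \<Longrightarrow> ?f y \<le> ?f v"
    using continuous_attains_sup[OF compact_sphere ne cont] by blast
  define \<mu> where "\<mu> = ?f v"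
  have nv: "norm v = 1" using v by simp
  have vv: "v \<bullet> v = 1" using nv by (simp add: dot_square_norm)
  have bound: "?f u \<le> \<mu> * (u \<bullet> u)" for u
  proof (cases "u = 0")
    case True then show ?thesis by simp
  next
    case False
    define w where "w = (1/norm u) *\<^sub>R u"
    have "w \<in> sphere 0 1" using False by (simp add: w_def)
    hence "?f w \<le> \<mu>" using vmax \<mu>_def by blast
    moreover have "?f w = ?f u / (norm u)^2"
      by (simp add: w_def matrix_vector_mult_scaleR power2_eq_square)
    moreover have "u \<bullet> u = (norm u)^2" by (simp add: dot_square_norm)
    moreover have "norm u > 0" using False by simp
    ultimately show ?thesis by (simp add: divide_le_eq mult.commute)
  qed
  have orth: "w \<bullet> (M *v v - \<mu> *\<^sub>R v) = 0" for w
  proof -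
    have "2*t*(w \<bullet> (M *v v - \<mu> *\<^sub>R v)) + t^2*(?f w - \<mu> * (w \<bullet> w)) \<le> 0" for t
    proof -
      have "?f (v + t *\<^sub>R w) \<le> \<mu> * ((v + t *\<^sub>R w) \<bullet> (v + t *\<^sub>R w))" by (rule bound)
      moreover have "?f (v + t *\<^sub>R w) = \<mu> + 2*t*(w \<bullet> (M *v v)) + t^2 * ?f w"
        using sym_inner[OF sym, of v w]
        by (simp add: \<mu>_def matrix_vector_right_distrib matrix_vector_mult_scaleR inner_add_left inner_add_right power2_eq_square algebra_simps)
      moreover have "(v + t *\<^sub>R w) \<bullet> (v + t *\<^sub>R w) = 1 + 2*t*(w \<bullet> v) + t^2*(w \<bullet> w)"
        using vv by (simp add: inner_add_left inner_add_right inner_commute power2_eq_square algebra_simps)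
      ultimately have "\<mu> + 2*t*(w \<bullet> (M *v v)) + t^2 * ?f w \<le> \<mu> * (1 + 2*t*(w \<bullet> v) + t^2*(w \<bullet> w))"
        by simp
      thus ?thesis by (simp add: inner_diff_right algebra_simps)
    qed
    thus ?thesis by (rule quad_zero)
  qed
  have "M *v v - \<mu> *\<^sub>R v = 0"
    using orth[of "M *v v - \<mu> *\<^sub>R v"] by simp
  hence "M *v v = \<mu> *\<^sub>R v" by simp
  moreover have "v \<noteq> 0" using nv by auto
  ultimately show ?thesis using bound by blast
qed


lemma finite_eig:
  fixes M :: "real^'n::finite^'n"
  assumes sym: "\<And>i j. M$i$j = M$j$i"
  shows "finite (real_eigenvalues M)"
proof -
  let ?S = "real_eigenvalues M"
  have "\<forall>l\<in>?S. \<exists>v. v \<noteq> 0 \<and> M *v v = l *\<^sub>R v" by (simp add: real_eigenvalues_def)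
  from bchoice[OF this] obtain ev where ev0: "\<forall>l\<in>?S. ev l \<noteq> 0 \<and> M *v ev l = l *\<^sub>R ev l"
    by blast
  have ev: "\<And>l. l \<in> ?S \<Longrightarrow> ev l \<noteq> 0 \<and> M *v ev l = l *\<^sub>R ev l" using ev0 by blast
  have inj: "inj_on ev ?S"
  proof (rule inj_onI)
    fix l m assume l: "l \<in> ?S" and m: "m \<in> ?S" and e: "ev l = ev m"
    have "l *\<^sub>R ev l = M *v ev l" using ev[OF l] by simp
    also have "\<dots> = M *v ev m" using e by (rule arg_cong)
    also have "\<dots> = m *\<^sub>R ev m" using ev[OF m] by simp
    also have "\<dots> = m *\<^sub>R ev l" by (simp only: e)
    finally have "l *\<^sub>R ev l = m *\<^sub>R ev l" .
    then show "l = m" using ev[OF l] scaleR_cancel_right by blast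
  qed
  have po: "pairwise orthogonal (ev ` ?S)"
  proof (clarsimp simp: pairwise_def orthogonal_def)
    fix l m assume l: "l \<in> ?S" and m: "m \<in> ?S" and ne: "ev l \<noteq> ev m"
    then have lm: "l \<noteq> m" by auto
    have "l * (ev l \<bullet> ev m) = (M *v ev l) \<bullet> ev m" using ev[OF l] by simp
    also have "\<dots> = ev m \<bullet> (M *v ev l)" by (simp add: inner_commute)
    also have "\<dots> = ev l \<bullet> (M *v ev m)" by (rule sym_inner[OF sym])
    also have "\<dots> = m * (ev l \<bullet> ev m)" using ev[OF m] by simp
    finally show "ev l \<bullet> ev m = 0" using lm by simp
  qed
  have "0 \<notin> ev ` ?S" using ev by force
  then have "independent (ev ` ?S)" using pairwise_orthogonal_independent po by blast
  then have "finite (ev ` ?S)" using independent_imp_finite by blast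
  then show ?thesis using finite_imageD inj by blast
qed

lemma eig_le:
  fixes M :: "real^'n::finite^'n"
  assumes "l \<in> real_eigenvalues M" and bound: "\<forall>u. u \<bullet> (M *v u) \<le> \<mu> * (u \<bullet> u)"
  shows "l \<le> \<mu>"
proof -
  obtain w where w: "w \<noteq> 0" "M *v w = l *\<^sub>R w" using assms(1) by (auto simp: real_eigenvalues_def)
  have "l * (w \<bullet> w) \<le> \<mu> * (w \<bullet> w)" using bound[rule_format, of w] w by simp
  moreover have "w \<bullet> w > 0" using w by simp
  ultimately show ?thesis by simp
qed

lemma lambda1_eq:
  fixes M :: "real^'n::finite^'n"
  assumes sym: "\<And>i j. M$i$j = M$j$i"
    and v: "v \<noteq> 0" "M *v v = \<mu> *\<^sub>R v" and bound: "\<forall>u. u \<bullet> (M *v u) \<le> \<mu> * (u \<bullet> u)"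
  shows "lambda1 M = \<mu>"
  unfolding lambda1_def
proof (rule Max_eqI)
  show "finite (real_eigenvalues M)" by (rule finite_eig[OF sym])
  show "\<mu> \<in> real_eigenvalues M" using v by (auto simp: real_eigenvalues_def)
  show "y \<le> \<mu>" if "y \<in> real_eigenvalues M" for y using eig_le[OF that bound] .
qed

lemma rho_ge:
  fixes M :: "real^'n::finite^'n"
  assumes sym: "\<And>i j. M$i$j = M$j$i" and "l \<in> real_eigenvalues M"
  shows "l \<le> sym_spectral_radius M"
proof -
  have "\<bar>l\<bar> \<le> sym_spectral_radius M"
    unfolding sym_spectral_radius_def
    using finite_eig[OF sym] assms(2) by (intro Max_ge) auto
  then show ?thesis by simp
qed

lemma signed_adj_nth[simp]: "signed_adj E \<pi> $ i $ j = (if E i j then \<pi> i j else 0)"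
  by (simp add: signed_adj_def)

lemma adj_nth[simp]: "adj E $ i $ j = (if E i j then 1 else 0)"
  by (simp add: adj_def)

lemma finish:
  fixes E :: "'n::finite \<Rightarrow> 'n \<Rightarrow> bool" and z :: "real^'n"
  assumes sg: "simple_graph E" and ab: "E a b"
    and H: "H = (\<lambda>i j. E i j \<and> \<not>((i=a \<and> j=b) \<or> (i=b \<and> j=a)))"
    and q: "qf (adj H) z > L * (z \<bullet> z)"
  shows "\<exists>H. simple_graph H \<and> H < E \<and> L < sym_spectral_radius (adj H)"
proof -
  have symE: "E i j = E j i" for i j using sg by (auto simp: simple_graph_def symp_def)
  have irr: "\<not> E i i" for i using sg by (auto simp: simple_graph_def irreflp_def)
  have sgH: "simple_graph H" unfolding simple_graph_def symp_def irreflp_def H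
    using symE irr by blast
  have lt: "H < E"
  proof -
    have "H \<le> E" unfolding H by auto
    moreover have "\<not> H a b" unfolding H by auto
    ultimately show ?thesis using ab by (metis order_less_le)
  qed
  have symH: "\<And>i j. adj H $i$j = adj H $j$i" using sgH
    by (auto simp: simple_graph_def symp_def)
  obtain w \<mu> where w: "w \<noteq> 0" "adj H *v w = \<mu> *\<^sub>R w"
    and bd: "\<forall>u. u \<bullet> (adj H *v u) \<le> \<mu> * (u \<bullet> u)"
    using sym_max_eig[OF symH] by blast
  have "qf (adj H) z \<le> \<mu> * (z \<bullet> z)" using bd qf_inner by metis
  with q have "L * (z \<bullet> z) < \<mu> * (z \<bullet> z)" by linarith
  moreover have zz: "z \<bullet> z \<ge> 0" by simp
  ultimately have "L < \<mu>"
  proof -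
    assume a: "L * (z \<bullet> z) < \<mu> * (z \<bullet> z)"
    show "L < \<mu>"
    proof (rule ccontr)
      assume "\<not> L < \<mu>"
      then have "\<mu> * (z \<bullet> z) \<le> L * (z \<bullet> z)" using zz by (simp add: mult_right_mono)
      then show False using a by linarith
    qed
  qed
  moreover have "\<mu> \<le> sym_spectral_radius (adj H)"
    using rho_ge[OF symH] w by (auto simp: real_eigenvalues_def)
  ultimately show ?thesis using sgH lt by force
qed

lemma diag_left: "(diag_mat d ** X) $ i $ j = d i * X $ i $ j"
proof -
  have "(diag_mat d ** X) $ i $ j = (\<Sum>k\<in>UNIV. (if i = k then d i else 0) * X $ k $ j)"
    by (simp add: diag_mat_def matrix_matrix_mult_def)
  also have "\<dots> = (\<Sum>k\<in>UNIV. if i = k then d i * X $ k $ j else 0)"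
    by (rule sum.cong) auto
  finally show ?thesis by simp
qed

lemma diag_right: "(X ** diag_mat d) $ i $ j = X $ i $ j * d j"
proof -
  have "(X ** diag_mat d) $ i $ j = (\<Sum>k\<in>UNIV. X $ i $ k * (if k = j then d k else 0))"
    by (simp add: diag_mat_def matrix_matrix_mult_def)
  also have "\<dots> = (\<Sum>k\<in>UNIV. if k = j then X $ i $ k * d j else 0)"
    by (rule sum.cong) auto
  finally show ?thesis by simp
qed

lemma diag_nth: "diag_mat d $ i $ j = (if i = j then d i else 0)"
  by (simp add: diag_mat_def)

lemma diag_inv:
  assumes d: "\<And>i. d i = 1 \<or> d i = -1"
  shows "matrix_inv (diag_mat d) = diag_mat d"
proof -
  let ?D = "diag_mat d"
  have DD: "?D ** ?D = mat 1"
  proof -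
    have "d i * d i = 1" for i using d[of i] by auto
    then show ?thesis by (simp add: vec_eq_iff diag_left diag_nth mat_def)
  qed
  have "\<exists>A'. ?D ** A' = mat 1 \<and> A' ** ?D = mat 1" using DD by blast
  then have A: "?D ** matrix_inv ?D = mat 1 \<and> matrix_inv ?D ** ?D = mat 1"
    unfolding matrix_inv_def by (rule someI_ex)
  have "matrix_inv ?D = matrix_inv ?D ** (?D ** ?D)" using DD by (simp add: matrix_mul_rid)
  also have "\<dots> = (matrix_inv ?D ** ?D) ** ?D" by (simp add: matrix_mul_assoc)
  also have "\<dots> = ?D" using A by (simp add: matrix_mul_lid)
  finally show ?thesis .
qed

lemma balancedI:
  assumes d: "\<And>i. d i = 1 \<or> d i = -1"
    and e: "\<And>i j. E i j \<Longrightarrow> \<pi> i j = d i * d j"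
  shows "balanced E \<pi>"
  unfolding balanced_def switching_equivalent_def
proof (intro exI conjI)
  show "\<forall>i. d i = 1 \<or> d i = -1" using d by blast
  show "signed_adj E \<pi> = matrix_inv (diag_mat d) ** adj E ** diag_mat d"
    unfolding diag_inv[OF d]
  proof (unfold vec_eq_iff, intro allI)
    fix i j
    have "(diag_mat d ** adj E ** diag_mat d) $ i $ j = d i * (if E i j then 1 else 0) * d j"
      by (simp only: diag_left diag_right adj_nth)
    then show "signed_adj E \<pi> $ i $ j = (diag_mat d ** adj E ** diag_mat d) $ i $ j"
      using e[of i j] by simp
  qed
qed

lemma crossing:
  assumes "R\<^sup>*\<^sup>* p w" "P p" "\<not> P w"
  shows "\<exists>u v. R u v \<and> P u \<and> \<not> P v"
  using assms
proof (induction rule: rtranclp_induct)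
  case base
  then show ?case by simp
next
  case (step y z)
  show ?case
  proof (cases "P y")
    case True
    then show ?thesis using step.hyps(2) step.prems(2) by blast
  next
    case False
    then show ?thesis using step.IH step.prems(1) by blast
  qed
qed


lemma dsum_less:
  fixes f g :: "'n::finite \<Rightarrow> 'n \<Rightarrow> real"
  assumes "\<And>i j. g i j \<le> f i j" and "g a b < f a b"
  shows "(\<Sum>i\<in>UNIV. \<Sum>j\<in>UNIV. g i j) < (\<Sum>i\<in>UNIV. \<Sum>j\<in>UNIV. f i j)"
proof (rule sum_strict_mono_ex1)
  show "finite (UNIV::'n set)" by simp
  show "\<forall>i\<in>UNIV. (\<Sum>j\<in>UNIV. g i j) \<le> (\<Sum>j\<in>UNIV. f i j)"
    using assms(1) by (simp add: sum_mono)
  have "(\<Sum>j\<in>UNIV. g a j) < (\<Sum>j\<in>UNIV. f a j)"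
    by (rule sum_strict_mono_ex1) (use assms in auto)
  then show "\<exists>i\<in>UNIV. (\<Sum>j\<in>UNIV. g i j) < (\<Sum>j\<in>UNIV. f i j)" by blast
qed

lemma dsum_le:
  fixes f g :: "'n::finite \<Rightarrow> 'n \<Rightarrow> real"
  assumes "\<And>i j. g i j \<le> f i j"
  shows "(\<Sum>i\<in>UNIV. \<Sum>j\<in>UNIV. g i j) \<le> (\<Sum>i\<in>UNIV. \<Sum>j\<in>UNIV. f i j)"
  using assms by (simp add: sum_mono)

lemma sign_lemma:
  fixes p a b :: real
  assumes "p = 1 \<or> p = -1" "a \<noteq> 0" "b \<noteq> 0" "p * a * b \<ge> 0"
  shows "p = sgn a * sgn b"
  using assms by (auto simp: sgn_if zero_le_mult_iff)

lemma hsum: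
  fixes u v :: "'n::finite"
  assumes "u \<noteq> v"
  shows "(\<Sum>i\<in>UNIV. \<Sum>j\<in>UNIV. (if i = u \<and> j = v then k else 0) + (if i = v \<and> j = u then k else 0)) = 2 * (k::real)"
proof -
  have e: "(\<Sum>j\<in>UNIV. if i = p \<and> j = q then k else 0) = (if i = p then k else 0)" for i p q :: 'n
    by (cases "i = p") simp_all
  show ?thesis using assms by (simp add: sum.distrib e)
qed



lemma h_zero:
  assumes n1: "\<not>(i = u \<and> j = v)" and n2: "\<not>(i = v \<and> j = u)"
  shows "(if i = u \<and> j = v then k else 0) + (if i = v \<and> j = u then k else 0) = (0::real)"
proof -
  have a: "(if i = u \<and> j = v then k else 0) = 0" using n1 by (rule if_not_P)
  have b: "(if i = v \<and> j = u then k else 0) = 0" using n2 by (rule if_not_P)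
  show ?thesis by (simp only: a b add_0_left)
qed

theorem mainTheorem1:
  fixes E :: "'n::finite \<Rightarrow> 'n \<Rightarrow> bool" and \<pi> :: "'n \<Rightarrow> 'n \<Rightarrow> real"
  assumes "simple_graph E" and "connected_graph E"
    and "signing E \<pi>" and "\<not> balanced E \<pi>"
  shows "\<exists>H :: 'n \<Rightarrow> 'n \<Rightarrow> bool. simple_graph H \<and> H < E \<and>
           lambda1 (signed_adj E \<pi>) < sym_spectral_radius (adj H)"
proof -
  note sg = assms(1)
  have symE: "E i j = E j i" for i j using sg by (auto simp: simple_graph_def symp_def)
  have irr: "\<not> E i i" for i using sg by (auto simp: simple_graph_def irreflp_def)
  have psym: "E i j \<Longrightarrow> \<pi> i j = \<pi> j i" for i j using assms(3) by (auto simp: signing_def)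
  have pval: "E i j \<Longrightarrow> \<pi> i j = 1 \<or> \<pi> i j = -1" for i j using assms(3) by (auto simp: signing_def)
  have conn: "E\<^sup>*\<^sup>* i j" for i j using assms(2) by (auto simp: connected_graph_def)
  let ?A = "signed_adj E \<pi>"
  have symA: "\<And>i j. ?A $i$j = ?A $j$i" using symE psym by auto
  obtain x \<mu> where x: "x \<noteq> 0" "?A *v x = \<mu> *\<^sub>R x"
    and bd: "\<forall>u. u \<bullet> (?A *v u) \<le> \<mu> * (u \<bullet> u)"
    using sym_max_eig[OF symA] by blast
  have lam: "lambda1 ?A = \<mu>" by (rule lambda1_eq[OF symA x bd])
  have qx: "(\<Sum>i\<in>UNIV. \<Sum>j\<in>UNIV. (if E i j then \<pi> i j else 0) * x$i * x$j) = \<mu> * (x \<bullet> x)"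
  proof -
    have "x \<bullet> (?A *v x) = \<mu> * (x \<bullet> x)" using x(2) by simp
    then show ?thesis unfolding qf_inner qf_def by simp
  qed
  show ?thesis
  proof (cases "\<exists>a b. E a b \<and> \<pi> a b * x$a * x$b < 0")
    case True
    then obtain a b where ab: "E a b" "\<pi> a b * x$a * x$b < 0" by blast
    define H where "H = (\<lambda>i j. E i j \<and> \<not>((i=a \<and> j=b) \<or> (i=b \<and> j=a)))"
    define z :: "real^'n" where "z = (\<chi> i. \<bar>x$i\<bar>)"
    have zz: "z \<bullet> z = x \<bullet> x" by (simp add: z_def inner_vec_def)
    have "qf (adj H) z > \<mu> * (z \<bullet> z)"
    proof -
      have "(\<Sum>i\<in>UNIV. \<Sum>j\<in>UNIV. (if E i j then \<pi> i j else 0) * x$i * x$j)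
          < (\<Sum>i\<in>UNIV. \<Sum>j\<in>UNIV. (if H i j then 1 else 0) * z$i * z$j)"
      proof (rule dsum_less)
        fix i j
        show "(if E i j then \<pi> i j else 0) * x$i * x$j \<le> (if H i j then 1 else 0) * z$i * z$j"
        proof (cases "H i j")
          case True
          then have "E i j" by (simp add: H_def)
          then have "\<pi> i j * x$i * x$j \<le> \<bar>\<pi> i j * x$i * x$j\<bar>" by simp
          also have "\<dots> = \<bar>x$i\<bar> * \<bar>x$j\<bar>" using pval[OF \<open>E i j\<close>] by (auto simp: abs_mult)
          finally show ?thesis using True \<open>E i j\<close> by (simp add: z_def)
        next
          case False
          show ?thesis
          proof (cases "E i j")
            case True
            with False have "(i=a \<and> j=b) \<or> (i=b \<and> j=a)" by (simp add: H_def)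
            then have "\<pi> i j * x$i * x$j = \<pi> a b * x$a * x$b" using psym[OF ab(1)] by (auto simp: mult_ac)
            then show ?thesis using True False ab by simp
          next
            case False
            then show ?thesis by (simp add: H_def)
          qed
        qed
      next
        show "(if E a b then \<pi> a b else 0) * x$a * x$b < (if H a b then 1 else 0) * z$a * z$b"
          using ab by (simp add: H_def)
      qed
      then show ?thesis unfolding qf_def zz qx[symmetric] by simp
    qed
    from finish[OF sg ab(1) H_def this] show ?thesis unfolding lam .
  next
    case False
    then have N: "\<And>a b. E a b \<Longrightarrow> \<pi> a b * x$a * x$b \<ge> 0" by (meson not_le)
    show ?thesis
    proof (cases "\<exists>u v a b. E u v \<and> x$u \<noteq> 0 \<and> x$v = 0 \<and> E a b \<and> (x$a = 0 \<or> x$b = 0) \<and> \<not>((a=u \<and> b=v) \<or> (a=v \<and> b=u))")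
      case True
      then obtain u v a b where uv: "E u v" "x$u \<noteq> 0" "x$v = 0" and ab: "E a b" "x$a = 0 \<or> x$b = 0"
        and ne: "\<not>((a=u \<and> b=v) \<or> (a=v \<and> b=u))" by blast
      have unv: "u \<noteq> v" using uv by auto
      define c where "c = \<bar>x$u\<bar>"
      have c: "c > 0" using uv by (simp add: c_def)
      define t where "t = (if \<mu> \<le> 0 then 1 else c / \<mu>)"
      have t: "t > 0" using c by (simp add: t_def)
      have key: "2 * t * c > \<mu> * t^2"
      proof (cases "\<mu> \<le> 0")
        case True
        then show ?thesis using c by (simp add: t_def)
      next
        case False
        then have tc: "t = c / \<mu>" by (simp add: t_def)
        have "2 * t * c - \<mu> * t^2 = c^2 / \<mu>" unfolding tc using False by (simp add: field_simps power2_eq_square)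
        moreover have "c^2/\<mu> > 0" using False c by simp
        ultimately show ?thesis by linarith
      qed
      define H where "H = (\<lambda>i j. E i j \<and> \<not>((i=a \<and> j=b) \<or> (i=b \<and> j=a)))"
      define z :: "real^'n" where "z = (\<chi> i. if i = v then t else \<bar>x$i\<bar>)"
      have zz: "z \<bullet> z = x \<bullet> x + t^2"
      proof -
        have "z$i * z$i = x$i * x$i + (if i = v then t * t else 0)" for i
          using uv(3) by (simp add: z_def)
        then show ?thesis by (simp add: inner_vec_def sum.distrib power2_eq_square)
      qed
      let ?h = "\<lambda>i j. (if i = u \<and> j = v then t*c else 0) + (if i = v \<and> j = u then t*c else 0)"
      have "(\<Sum>i\<in>UNIV. \<Sum>j\<in>UNIV. (if E i j then \<pi> i j else 0) * x$i * x$j + ?h i j)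
          \<le> (\<Sum>i\<in>UNIV. \<Sum>j\<in>UNIV. (if H i j then 1 else 0) * z$i * z$j)"
      proof (rule dsum_le)
        fix i j
        have zi: "z$i \<ge> 0" "z$j \<ge> 0" using t by (auto simp: z_def)
        show "(if E i j then \<pi> i j else 0) * x$i * x$j + ?h i j \<le> (if H i j then 1 else 0) * z$i * z$j"
        proof (cases "H i j")
          case True
          then have Eij: "E i j" by (simp add: H_def)
          show ?thesis
          proof (cases "i = v \<or> j = v")
            case True
            then have g0: "(if E i j then \<pi> i j else 0) * x$i * x$j = 0" using uv(3) by auto
            show ?thesis
            proof (cases "(i = u \<and> j = v) \<or> (i = v \<and> j = u)")
              case True
              have h: "?h i j = t*c" using True unv by auto
              have f: "(if H i j then 1 else 0) * z$i * z$j = t * c"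
                using True
              proof
                assume a: "i = u \<and> j = v"
                then have "H u v" using \<open>H i j\<close> by simp
                have "z$v = t" "z$u = c" using unv by (simp_all add: z_def c_def)
                then show ?thesis using a \<open>H u v\<close> by (simp add: mult.commute)
              next
                assume a: "i = v \<and> j = u"
                then have "H v u" using \<open>H i j\<close> by simp
                have "z$v = t" "z$u = c" using unv by (simp_all add: z_def c_def)
                then show ?thesis using a \<open>H v u\<close> by (simp add: mult.commute)
              qed
              have L: "(if E i j then \<pi> i j else 0) * x$i * x$j + ?h i j = t*c"
                by (simp only: g0 h add_0_left)
              show ?thesis by (simp only: L f order_refl)
            next
              case False
              then have hz: "?h i j = 0" by (intro h_zero) blast+
              have ge: "0 \<le> (if H i j then 1 else 0) * z$i * z$j" using zi by simp
              show ?thesis unfolding g0 hz add_0_left by (rule ge)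
            qed
          next
            case False
            then have h0: "?h i j = 0" by (intro h_zero) blast+
            have "\<pi> i j * x$i * x$j \<le> \<bar>\<pi> i j * x$i * x$j\<bar>" by simp
            also have "\<dots> = \<bar>x$i\<bar> * \<bar>x$j\<bar>" using pval[OF Eij] by (auto simp: abs_mult)
            finally show ?thesis using False Eij \<open>H i j\<close> h0 by (simp add: z_def)
          qed
        next
          case False
          show ?thesis
          proof (cases "E i j")
            case True
            with False have ij: "(i=a \<and> j=b) \<or> (i=b \<and> j=a)" by (simp add: H_def)
            then have "x$i = 0 \<or> x$j = 0" using ab(2) by auto
            moreover have "?h i j = 0" using ij ne by (intro h_zero) blast+
            ultimately show ?thesis using False by auto
          next
            case False
            then have "\<not> ((i = u \<and> j = v) \<or> (i = v \<and> j = u))" using uv(1) symE by blast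
            then have "?h i j = 0" by (intro h_zero) blast+
            then show ?thesis using False by (simp add: H_def)
          qed
        qed
      qed
      moreover have "(\<Sum>i\<in>UNIV. \<Sum>j\<in>UNIV. (if E i j then \<pi> i j else 0) * x$i * x$j + ?h i j)
          = \<mu> * (x \<bullet> x) + 2 * (t * c)"
        using qx hsum[OF unv, of "t*c"] by (simp add: sum.distrib)
      ultimately have "qf (adj H) z \<ge> \<mu> * (x \<bullet> x) + 2 * (t * c)"
        unfolding qf_def by simp
      then have "qf (adj H) z > \<mu> * (z \<bullet> z)" using key unfolding zz by (simp add: algebra_simps)
      from finish[OF sg ab(1) H_def this] show ?thesis unfolding lam .
    next
      case False
      then have C: "\<And>u v a b. E u v \<Longrightarrow> x$u \<noteq> 0 \<Longrightarrow> x$v = 0 \<Longrightarrow> E a b \<Longrightarrow> (x$a = 0 \<or> x$b = 0)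
          \<Longrightarrow> (a=u \<and> b=v) \<or> (a=v \<and> b=u)" by blast
      have "balanced E \<pi>"
      proof (cases "\<forall>i. x$i \<noteq> 0")
        case True
        show ?thesis
        proof (rule balancedI[of "\<lambda>i. sgn (x$i)"])
          show "sgn (x$i) = 1 \<or> sgn (x$i) = -1" for i using True by (auto simp: sgn_if)
          show "\<pi> i j = sgn (x$i) * sgn (x$j)" if "E i j" for i j
            using sign_lemma[OF pval[OF that] _ _ N[OF that]] True by auto
        qed
      next
        case False
        then obtain w where w: "x$w = 0" by blast
        obtain p where p: "x$p \<noteq> 0" using x(1) by (auto simp: vec_eq_iff)
        obtain u v where uv: "E u v" "x$u \<noteq> 0" "x$v = 0"
          using crossing[of E p w "\<lambda>i. x$i \<noteq> 0"] conn p w by auto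
        have unv: "u \<noteq> v" using uv by auto
        have zero: "q = v" if "x$q = 0" for q
        proof -
          have "u \<noteq> q" using uv that by auto
          from conn[of u q] this obtain y where "E y q"
            by (metis rtranclp.cases)
          then have "(y=u \<and> q=v) \<or> (y=v \<and> q=u)" using C[OF uv] that by blast
          then show ?thesis using \<open>u \<noteq> q\<close> by auto
        qed
        define d where "d = (\<lambda>i. if i = v then \<pi> u v * sgn (x$u) else sgn (x$i))"
        have su: "sgn (x$u) = 1 \<or> sgn (x$u) = -1" using uv by (auto simp: sgn_if)
        have su2: "sgn (x$u) * sgn (x$u) = 1" using su by auto
        show ?thesis
        proof (rule balancedI[of d])
          show "d i = 1 \<or> d i = -1" for i
          proof (cases "i = v")
            case True then show ?thesis using pval[OF uv(1)] su by (auto simp: d_def)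
          next
            case False then have "x$i \<noteq> 0" using zero by blast
            then show ?thesis using False by (auto simp: d_def sgn_if)
          qed
          show "\<pi> i j = d i * d j" if Eij: "E i j" for i j
          proof (cases "i = v")
            case True
            then have "j = u" using C[OF uv Eij] uv(3) unv by auto
            then show ?thesis using True psym[OF uv(1)] unv su2 by (simp add: d_def algebra_simps)
          next
            case iv: False
            show ?thesis
            proof (cases "j = v")
              case True
              then have "i = u" using C[OF uv Eij] uv(3) unv by auto
              then show ?thesis using True unv su2 by (simp add: d_def algebra_simps)
            next
              case False
              have "x$i \<noteq> 0" "x$j \<noteq> 0" using zero iv False by blast+
              then show ?thesis using sign_lemma[OF pval[OF Eij] _ _ N[OF Eij]] iv False
                by (simp add: d_def)
            qed
          qed
        qed
      qed
      then show ?thesis using assms(4) by blast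
    qed
  qed
qed

end
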